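(* Let $T<\infty$ and define $(V_t,S_t)_{t\le T}$ and $J_t$ (on $\{t<T_e\}$) by the backward recursion: $V_T=G_T$, $S_T=1_{D_T}$, and for $t=T-1,\dots,0$, $J_t=E[S_{t+1}V_{t+1}\mid\mathcal{F}_t]/E[S_{t+1}\mid\mathcal{F}_t]$ on $\{t<T_e\}$, with $V_t=G_t,S_t=1$ on $\{t<T_e, G_t\ge J_t\}$; $V_t=J_t, S_t=E[S_{t+1}\mid\mathcal{F}_t]$ on $\{t<T_e,G_t<J_t\}$; $V_t=G_t, S_t=1_{D_t}$ on $\{t\ge T_e\}$. Let $\theta_t=1_{\{G_t\ge V_t\}}$. Then $\theta$ is admissible, \[ J_t=J_t(\theta)\quad\text{and}\quad E[S_{t+1}\mid\mathcal{F}_t]=P(\mathcal{L}_t\theta\lhd\sigma\mid\mathcal{F}_t)\quad\text{on }\{t<T_e\}, \] and for all $t\le T$, \[ S_t=\begin{cases}P(\mathcal{L}_t\theta\lhd\sigma\mid\mathcal{F}_t)&\text{on } D_t\cap\{\theta_t=0\},\\ 1&\text{on } D_t\cap\{\theta_t=1\},\\ 0 & \text{on } D_t^c.\end{cases} \]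
   Context: Let $T\in\mathbb{N}$ and $\mathbb{T}=\{0,1,\dots,T\}$. Let $(\Omega,\mathcal{F},P)$ be a probability space with a filtration $(\mathcal{F}_t)_{t\le T}$, $\mathcal{F}_0$ trivial. Let $\sigma$ be a stopping time with values in $\{0,1,2,\dots\}\cup\{\infty\}$ and $P(\sigma>0)=1$; set $D_t=\{t<\sigma\}$. Let $G=(G_t)_{t\le T}$ be an adapted payoff process; on $D_t^c$ one sets $G_t=\Delta$, an auxiliary symbol with the convention $0\cdot\Delta=0$. Standing assumption: $E[\sup_{t\le T}|G_t|1_{D_t}]<\infty$. For $s,t\in[0,\infty]$ write $s\lhd t$ iff $s<t$ or $t=\infty$. Convention: $\inf\emptyset=\infty$. The effective horizon is $T_e=T\wedge\inf\{0\le t<T: P(D_{t+1}\mid\mathcal{F}_t)=0\}$. A stopping policy is a $\{0,1\}$-valued adapted process $\theta=(\theta_t)_{t\in\mathbb{T}}$, and $\mathcal{L}_t\theta=\inf\{s>t:\theta_s=1\}$. $\theta$ is admissible if $P(\mathcal{L}_t\theta\lhd\sigma\mid\mathcal{F}_t)>0$ on $\{t<T_e\}$ and $\theta_t=1$ on $\{t\ge T_e\}$. For admissible $\theta$, on $\{t<T_e\}$, $J_t(\theta)=E[G_{\mathcal{L}_t\theta}1_{\{\mathcal{L}_t\theta\lhd\sigma\}}\mid\mathcal{F}_t]/P(\mathcal{L}_t\theta\lhd\sigma\mid\mathcal{F}_t)$. *)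

theory Defs
  imports "HOL-Probability.Probability"
begin

definition lhd :: "enat \<Rightarrow> enat \<Rightarrow> bool" where
  "lhd s t \<longleftrightarrow> s < t \<or> t = \<infinity>"

definition Dset :: "'a measure \<Rightarrow> ('a \<Rightarrow> enat) \<Rightarrow> nat \<Rightarrow> 'a set" where
  "Dset M \<sigma> t = {\<omega> \<in> space M. enat t < \<sigma> \<omega>}"

definition cprob :: "'a measure \<Rightarrow> 'a measure \<Rightarrow> 'a set \<Rightarrow> 'a \<Rightarrow> real" where
  "cprob M N A = real_cond_exp M N (indicator A)"

definition Te :: "'a measure \<Rightarrow> (nat \<Rightarrow> 'a measure) \<Rightarrow> ('a \<Rightarrow> enat) \<Rightarrow> nat \<Rightarrow> 'a \<Rightarrow> nat" where
  "Te M F \<sigma> T \<omega> =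
     (if \<exists>t<T. cprob M (F t) (Dset M \<sigma> (Suc t)) \<omega> = 0
      then (LEAST t. t < T \<and> cprob M (F t) (Dset M \<sigma> (Suc t)) \<omega> = 0) else T)"

definition Lop :: "nat \<Rightarrow> (nat \<Rightarrow> 'a \<Rightarrow> real) \<Rightarrow> nat \<Rightarrow> 'a \<Rightarrow> enat" where
  "Lop T \<theta> t \<omega> =
     (if \<exists>s. t < s \<and> s \<le> T \<and> \<theta> s \<omega> = 1
      then enat (LEAST s. t < s \<and> s \<le> T \<and> \<theta> s \<omega> = 1) else \<infinity>)"

definition Lev :: "'a measure \<Rightarrow> ('a \<Rightarrow> enat) \<Rightarrow> nat \<Rightarrow> (nat \<Rightarrow> 'a \<Rightarrow> real) \<Rightarrow> nat \<Rightarrow> 'a set" where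
  "Lev M \<sigma> T \<theta> t = {\<omega> \<in> space M. lhd (Lop T \<theta> t \<omega>) (\<sigma> \<omega>)}"

definition admissible ::
  "'a measure \<Rightarrow> (nat \<Rightarrow> 'a measure) \<Rightarrow> ('a \<Rightarrow> enat) \<Rightarrow> nat \<Rightarrow> (nat \<Rightarrow> 'a \<Rightarrow> real) \<Rightarrow> bool" where
  "admissible M F \<sigma> T \<theta> \<longleftrightarrow>
     (\<forall>t\<le>T. \<theta> t \<in> borel_measurable (F t) \<and> (\<forall>\<omega>\<in>space M. \<theta> t \<omega> \<in> {0, 1})) \<and>
     (\<forall>t\<le>T. AE \<omega> in M. t < Te M F \<sigma> T \<omega> \<longrightarrow> cprob M (F t) (Lev M \<sigma> T \<theta> t) \<omega> > 0) \<and>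
     (\<forall>t\<le>T. AE \<omega> in M. Te M F \<sigma> T \<omega> \<le> t \<longrightarrow> \<theta> t \<omega> = 1)"

text \<open>The integrand is 0 where L_t theta = \<infinity> (only relevant on a null set for admissible theta).\<close>
definition Jtheta ::
  "'a measure \<Rightarrow> (nat \<Rightarrow> 'a measure) \<Rightarrow> ('a \<Rightarrow> enat) \<Rightarrow> (nat \<Rightarrow> 'a \<Rightarrow> real) \<Rightarrow> nat
    \<Rightarrow> (nat \<Rightarrow> 'a \<Rightarrow> real) \<Rightarrow> nat \<Rightarrow> 'a \<Rightarrow> real" where
  "Jtheta M F \<sigma> G T \<theta> t \<omega> =
     real_cond_exp M (F t)
       (\<lambda>\<omega>'. (case Lop T \<theta> t \<omega>' of enat s \<Rightarrow> G s \<omega>' | \<infinity> \<Rightarrow> 0)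
               * indicator (Lev M \<sigma> T \<theta> t) \<omega>') \<omega>
     / cprob M (F t) (Lev M \<sigma> T \<theta> t) \<omega>"

end

theory Submission
  imports Defs
begin


locale L32 =
  fixes M :: "'a measure" and F :: "nat \<Rightarrow> 'a measure" and \<sigma> :: "'a \<Rightarrow> enat"
    and G V S J \<theta> :: "nat \<Rightarrow> 'a \<Rightarrow> real" and T :: nat
  assumes prob: "prob_space M"
    and subalg: "\<And>t. subalgebra M (F t)"
    and filt: "\<And>s t. s \<le> t \<Longrightarrow> sets (F s) \<subseteq> sets (F t)"
    and stopping: "\<And>t. {\<omega> \<in> space M. \<sigma> \<omega> \<le> enat t} \<in> sets (F t)"
    and adapted: "\<And>t. G t \<in> borel_measurable (F t)"
    and integr: "integrable M (\<lambda>\<omega>. Max ((\<lambda>t. \<bar>G t \<omega>\<bar> * indicator (Dset M \<sigma> t) \<omega>) ` {..T}))"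
    and V_T: "\<And>\<omega>. V T \<omega> = G T \<omega>"
    and S_T: "\<And>\<omega>. S T \<omega> = indicator (Dset M \<sigma> T) \<omega>"
    and J_def: "\<And>t \<omega>. t < T \<Longrightarrow> t < Te M F \<sigma> T \<omega> \<Longrightarrow>
       J t \<omega> = real_cond_exp M (F t) (\<lambda>\<omega>'. S (Suc t) \<omega>' * V (Suc t) \<omega>') \<omega>
                / real_cond_exp M (F t) (S (Suc t)) \<omega>"
    and rec_stop: "\<And>t \<omega>. t < T \<Longrightarrow> t < Te M F \<sigma> T \<omega> \<Longrightarrow> G t \<omega> \<ge> J t \<omega> \<Longrightarrow>
       V t \<omega> = G t \<omega> \<and> S t \<omega> = 1"
    and rec_cont: "\<And>t \<omega>. t < T \<Longrightarrow> t < Te M F \<sigma> T \<omega> \<Longrightarrow> G t \<omega> < J t \<omega> \<Longrightarrow>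
       V t \<omega> = J t \<omega> \<and> S t \<omega> = real_cond_exp M (F t) (S (Suc t)) \<omega>"
    and rec_end: "\<And>t \<omega>. t < T \<Longrightarrow> Te M F \<sigma> T \<omega> \<le> t \<Longrightarrow>
       V t \<omega> = G t \<omega> \<and> S t \<omega> = indicator (Dset M \<sigma> t) \<omega>"
    and theta_def: "\<And>t \<omega>. \<theta> t \<omega> = (if G t \<omega> \<ge> V t \<omega> then 1 else 0)"
begin

interpretation P: prob_space M by (rule prob)

lemma sfs: "sigma_finite_subalgebra M (F t)"
proof -
  interpret finite_measure_subalgebra M "F t"
    by unfold_locales (rule subalg)
  show ?thesis by (rule sigma_finite_subalgebra_axioms)
qed

lemma space_F[simp]: "space (F t) = space M"
  using subalg[of t] by (simp add: subalgebra_def)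

lemma sub2: "s \<le> t \<Longrightarrow> subalgebra (F t) (F s)"
  using filt by (simp add: subalgebra_def)

lemma meas_lift: "s \<le> t \<Longrightarrow> f \<in> borel_measurable (F s) \<Longrightarrow> f \<in> borel_measurable (F t)"
  by (rule measurable_from_subalg[OF sub2])

lemma meas_M: "f \<in> borel_measurable (F s) \<Longrightarrow> f \<in> borel_measurable M"
  by (rule measurable_from_subalg[OF subalg])

lemma sets_M: "A \<in> sets (F s) \<Longrightarrow> A \<in> sets M"
  using subalg[of s] by (auto simp: subalgebra_def)

lemma Dset_F: "Dset M \<sigma> t \<in> sets (F t)"
proof -
  have "Dset M \<sigma> t = space (F t) - {\<omega> \<in> space M. \<sigma> \<omega> \<le> enat t}"
    by (auto simp: Dset_def not_le)
  then show ?thesis using sets.compl_sets[OF stopping[of t]] by simp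
qed

lemma Dset_M: "Dset M \<sigma> t \<in> sets M"
  using sets_M[OF Dset_F] .

lemma Dset_ind_F[measurable]: "indicator (Dset M \<sigma> t) \<in> borel_measurable (F t)"
  using Dset_F by measurable

lemma Dset_ind_M[measurable]: "(indicator (Dset M \<sigma> t) :: 'a \<Rightarrow> real) \<in> borel_measurable M"
  using Dset_M by measurable

lemma G_M[measurable]: "G t \<in> borel_measurable M"
  using meas_M[OF adapted] .

definition cc :: "nat \<Rightarrow> 'a \<Rightarrow> real" where
  "cc t = cprob M (F t) (Dset M \<sigma> (Suc t))"

lemma cc_meas: "cc s \<in> borel_measurable (F s)"
  unfolding cc_def cprob_def by measurable

lemma Te_alt: "Te M F \<sigma> T \<omega> = (if \<exists>t<T. cc t \<omega> = 0 then (LEAST t. t < T \<and> cc t \<omega> = 0) else T)"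
  unfolding Te_def cc_def ..

lemma Te_le: "Te M F \<sigma> T \<omega> \<le> T"
proof (cases "\<exists>t<T. cc t \<omega> = 0")
  case True
  then obtain t where "t < T \<and> cc t \<omega> = 0" by blast
  then have "(LEAST t. t < T \<and> cc t \<omega> = 0) < T" by (rule LeastI2) auto
  then show ?thesis using True by (simp add: Te_alt)
qed (auto simp add: Te_alt)

lemma Te_less_iff: "t < Te M F \<sigma> T \<omega> \<longleftrightarrow> t < T \<and> (\<forall>s\<le>t. cc s \<omega> \<noteq> 0)"
proof (cases "\<exists>t<T. cc t \<omega> = 0")
  case True
  let ?L = "LEAST t. t < T \<and> cc t \<omega> = 0"
  from True obtain t0 where t0: "t0 < T \<and> cc t0 \<omega> = 0" by blast
  have L: "?L < T \<and> cc ?L \<omega> = 0" by (rule LeastI[of _ t0]) (rule t0)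
  have "t < ?L \<longleftrightarrow> t < T \<and> (\<forall>s\<le>t. cc s \<omega> \<noteq> 0)"
  proof
    assume "t < ?L"
    then show "t < T \<and> (\<forall>s\<le>t. cc s \<omega> \<noteq> 0)"
      using L not_less_Least[of _ "\<lambda>t. t < T \<and> cc t \<omega> = 0"] by (meson le_less_trans less_trans)
  next
    assume "t < T \<and> (\<forall>s\<le>t. cc s \<omega> \<noteq> 0)"
    then show "t < ?L" using L by (meson not_le)
  qed
  then show ?thesis using True by (simp add: Te_alt)
next
  case False
  then show ?thesis by (auto simp: Te_alt)
qed

lemma Te_pred: "Measurable.pred (F t) (\<lambda>\<omega>. t < Te M F \<sigma> T \<omega>)"
proof -
  have [measurable]: "Measurable.pred (F t) (\<lambda>\<omega>. cc s \<omega> \<noteq> 0)" if "s \<in> {..t}" for s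
  proof -
    have [measurable]: "cc s \<in> borel_measurable (F t)" using meas_lift[OF _ cc_meas] that by auto
    show ?thesis by measurable
  qed
  have "Measurable.pred (F t) (\<lambda>\<omega>. t < T \<and> (\<forall>s\<in>{..t}. cc s \<omega> \<noteq> 0))"
    by measurable
  then show ?thesis by (simp add: Te_less_iff atMost_iff)
qed

end

context L32 begin
interpretation P: prob_space M by (rule prob)
lemma theta_01: "\<theta> t \<omega> = 0 \<or> \<theta> t \<omega> = 1"
  by (simp add: theta_def)

lemma theta_T: "\<theta> T \<omega> = 1"
  by (simp add: theta_def V_T)

lemma theta_end: "t \<le> T \<Longrightarrow> Te M F \<sigma> T \<omega> \<le> t \<Longrightarrow> \<theta> t \<omega> = 1"
  by (cases "t = T") (auto simp: theta_T theta_def rec_end V_T)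

lemma theta0: "t \<le> T \<Longrightarrow> \<theta> t \<omega> = 0 \<Longrightarrow> t < Te M F \<sigma> T \<omega>"
  using theta_end[of t \<omega>] by (metis not_le zero_neq_one)

lemma theta0_T: "t \<le> T \<Longrightarrow> \<theta> t \<omega> = 0 \<Longrightarrow> t < T"
  using theta0 Te_le le_less_trans by (meson less_le_trans)

definition Jx :: "nat \<Rightarrow> 'a \<Rightarrow> real" where
  "Jx t \<omega> = real_cond_exp M (F t) (\<lambda>\<omega>'. S (Suc t) \<omega>' * V (Suc t) \<omega>') \<omega>
                / real_cond_exp M (F t) (S (Suc t)) \<omega>"

lemma Jx_meas[measurable]: "Jx t \<in> borel_measurable (F t)"
  unfolding Jx_def by measurable

lemma theta_alt: "t < T \<Longrightarrow> \<theta> t \<omega> = (if t < Te M F \<sigma> T \<omega> \<and> G t \<omega> < Jx t \<omega> then 0 else 1)"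
proof (cases "t < Te M F \<sigma> T \<omega>")
  case True
  assume tT: "t < T"
  show ?thesis
  proof (cases "G t \<omega> < J t \<omega>")
    case c: True
    then show ?thesis using rec_cont[OF tT True c] J_def[OF tT True] True by (simp add: theta_def Jx_def)
  next
    case c: False
    then show ?thesis using rec_stop[OF tT True] J_def[OF tT True] True by (simp add: theta_def Jx_def)
  qed
next
  case False
  assume tT: "t < T"
  then show ?thesis using theta_end[of t \<omega>] False by simp
qed

lemma theta_meas[measurable]: "t \<le> T \<Longrightarrow> \<theta> t \<in> borel_measurable (F t)"
proof (cases "t = T")
  case True
  then show ?thesis by (simp add: theta_T[abs_def])
next
  case False
  assume "t \<le> T"
  with False have tT: "t < T" by simp
  have [measurable]: "Measurable.pred (F t) (\<lambda>\<omega>. t < Te M F \<sigma> T \<omega>)" by (rule Te_pred)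
  have [measurable]: "G t \<in> borel_measurable (F t)" by (rule adapted)
  have "(\<lambda>\<omega>. if t < Te M F \<sigma> T \<omega> \<and> G t \<omega> < Jx t \<omega> then 0 else 1::real) \<in> borel_measurable (F t)"
    by measurable
  then show ?thesis using theta_alt[OF tT] by (simp add: fun_eq_iff[symmetric] cong: measurable_cong)
qed

lemma theta_M[measurable]: "t \<le> T \<Longrightarrow> \<theta> t \<in> borel_measurable M"
  using meas_M[OF theta_meas] .

lemma S_meas: "t \<le> T \<Longrightarrow> S t \<in> borel_measurable (F t)"
proof (cases "t = T")
  case True
  then show ?thesis using Dset_ind_F[of T] by (simp add: S_T[abs_def])
next
  case False
  assume "t \<le> T"
  with False have tT: "t < T" by simp
  have [measurable]: "Measurable.pred (F t) (\<lambda>\<omega>. t < Te M F \<sigma> T \<omega>)" by (rule Te_pred)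
  have [measurable]: "G t \<in> borel_measurable (F t)" by (rule adapted)
  have eq: "S t \<omega> = (if t < Te M F \<sigma> T \<omega> then (if G t \<omega> < Jx t \<omega> then real_cond_exp M (F t) (S (Suc t)) \<omega> else 1)
       else indicator (Dset M \<sigma> t) \<omega>)" for \<omega>
    using rec_cont[OF tT] rec_stop[OF tT] rec_end[OF tT] J_def[OF tT] by (auto simp: Jx_def)
  have "(\<lambda>\<omega>. if t < Te M F \<sigma> T \<omega> then (if G t \<omega> < Jx t \<omega> then real_cond_exp M (F t) (S (Suc t)) \<omega> else 1)
       else indicator (Dset M \<sigma> t) \<omega>) \<in> borel_measurable (F t)"
    by measurable
  then show ?thesis by (simp add: eq[abs_def])
qed

lemma V_meas: "t \<le> T \<Longrightarrow> V t \<in> borel_measurable (F t)"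
proof (cases "t = T")
  case True
  then show ?thesis using adapted[of T] by (simp add: V_T[abs_def])
next
  case False
  assume "t \<le> T"
  with False have tT: "t < T" by simp
  have [measurable]: "Measurable.pred (F t) (\<lambda>\<omega>. t < Te M F \<sigma> T \<omega>)" by (rule Te_pred)
  have [measurable]: "G t \<in> borel_measurable (F t)" by (rule adapted)
  have eq: "V t \<omega> = (if t < Te M F \<sigma> T \<omega> \<and> G t \<omega> < Jx t \<omega> then Jx t \<omega> else G t \<omega>)" for \<omega>
  proof (cases "t < Te M F \<sigma> T \<omega>")
    case True
    then show ?thesis using rec_cont[OF tT True] rec_stop[OF tT True] J_def[OF tT True]
      by (cases "G t \<omega> < Jx t \<omega>") (auto simp: Jx_def)
  next
    case False
    then show ?thesis using rec_end[OF tT, of \<omega>] by simp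
  qed
  have "(\<lambda>\<omega>. if t < Te M F \<sigma> T \<omega> \<and> G t \<omega> < Jx t \<omega> then Jx t \<omega> else G t \<omega>) \<in> borel_measurable (F t)"
    by measurable
  then show ?thesis by (simp add: eq[abs_def])
qed

lemma S_M[measurable]: "t \<le> T \<Longrightarrow> S t \<in> borel_measurable M"
  using meas_M[OF S_meas] .
lemma V_M[measurable]: "t \<le> T \<Longrightarrow> V t \<in> borel_measurable M"
  using meas_M[OF V_meas] .

lemma Lop_rec: "t < T \<Longrightarrow> Lop T \<theta> t \<omega> = (if \<theta> (Suc t) \<omega> = 1 then enat (Suc t) else Lop T \<theta> (Suc t) \<omega>)"
proof (cases "\<theta> (Suc t) \<omega> = 1")
  case True
  assume "t < T"
  then have "(LEAST s. t < s \<and> s \<le> T \<and> \<theta> s \<omega> = 1) = Suc t"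
    using True by (intro Least_equality) auto
  then show ?thesis using True \<open>t < T\<close> unfolding Lop_def by (auto intro!: exI[of _ "Suc t"])
next
  case False
  then have "(\<lambda>s. t < s \<and> s \<le> T \<and> \<theta> s \<omega> = 1) = (\<lambda>s. Suc t < s \<and> s \<le> T \<and> \<theta> s \<omega> = 1)"
    by (auto simp: fun_eq_iff) (metis Suc_lessI)
  then show ?thesis using False unfolding Lop_def by (simp, blast)
qed

lemma Lop_T: "Lop T \<theta> T \<omega> = \<infinity>"
  unfolding Lop_def by auto

end

context L32 begin
interpretation P: prob_space M by (rule prob)
definition ind :: "nat \<Rightarrow> 'a \<Rightarrow> real" where
  "ind t = indicator (Lev M \<sigma> T \<theta> t)"

definition GL :: "nat \<Rightarrow> 'a \<Rightarrow> real" where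
  "GL t = (\<lambda>\<omega>'. (case Lop T \<theta> t \<omega>' of enat s \<Rightarrow> G s \<omega>' | \<infinity> \<Rightarrow> 0)
               * indicator (Lev M \<sigma> T \<theta> t) \<omega>')"

lemma ind_rec: "t < T \<Longrightarrow> \<omega> \<in> space M \<Longrightarrow>
  ind t \<omega> = \<theta> (Suc t) \<omega> * indicator (Dset M \<sigma> (Suc t)) \<omega> + (1 - \<theta> (Suc t) \<omega>) * ind (Suc t) \<omega>"
  using theta_01[of "Suc t" \<omega>]
  by (auto simp: ind_def Lev_def Dset_def indicator_def Lop_rec lhd_def)

lemma GL_rec: "t < T \<Longrightarrow> \<omega> \<in> space M \<Longrightarrow>
  GL t \<omega> = \<theta> (Suc t) \<omega> * (G (Suc t) \<omega> * indicator (Dset M \<sigma> (Suc t)) \<omega>) + (1 - \<theta> (Suc t) \<omega>) * GL (Suc t) \<omega>"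
  using theta_01[of "Suc t" \<omega>]
  by (auto simp: GL_def Lev_def Dset_def indicator_def Lop_rec lhd_def)

lemma GL_T: "GL T \<omega> = 0"
  by (simp add: GL_def Lop_T)

definition B :: "'a \<Rightarrow> real" where
  "B \<omega> = Max ((\<lambda>t. \<bar>G t \<omega>\<bar> * indicator (Dset M \<sigma> t) \<omega>) ` {..T})"

lemma B_ge: "s \<le> T \<Longrightarrow> \<bar>G s \<omega>\<bar> * indicator (Dset M \<sigma> s) \<omega> \<le> B \<omega>"
  unfolding B_def by (rule Max_ge) auto

lemma B_nonneg: "0 \<le> B \<omega>"
  using B_ge[of 0 \<omega>] by (metis abs_ge_zero indicator_pos_le mult_nonneg_nonneg order_trans le0)

lemma B_int: "integrable M B"
  using integr unfolding B_def[abs_def] .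

end

context L32 begin
interpretation P: prob_space M by (rule prob)
lemma ind_GL_M: "k \<le> T \<Longrightarrow> ind (T - k) \<in> borel_measurable M \<and> GL (T - k) \<in> borel_measurable M
   \<and> (\<forall>\<omega>. \<bar>GL (T - k) \<omega>\<bar> \<le> B \<omega>) \<and> (\<forall>\<omega>. 0 \<le> ind (T - k) \<omega> \<and> ind (T - k) \<omega> \<le> 1)"
proof (induction k)
  case 0
  have inf: "\<sigma> \<omega> = \<infinity> \<longleftrightarrow> \<not>(\<exists>n. \<sigma> \<omega> \<le> enat n)" for \<omega>
    by (cases "\<sigma> \<omega>") auto
  have "Lev M \<sigma> T \<theta> T = space M - (\<Union>n. {\<omega> \<in> space M. \<sigma> \<omega> \<le> enat n})"
    unfolding Lev_def Lop_T lhd_def using inf by auto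
  moreover have "(\<Union>n. {\<omega> \<in> space M. \<sigma> \<omega> \<le> enat n}) \<in> sets M"
    using sets_M[OF stopping] by blast
  ultimately have "Lev M \<sigma> T \<theta> T \<in> sets M" by auto
  then show ?case by (auto simp: ind_def GL_T[abs_def] B_nonneg indicator_def)
next
  case (Suc k)
  let ?t = "T - Suc k"
  have tT: "?t < T" and st: "Suc ?t = T - k" using Suc.prems by auto
  from Suc have IH: "ind (T - k) \<in> borel_measurable M" "GL (T - k) \<in> borel_measurable M"
     "\<And>\<omega>. \<bar>GL (T - k) \<omega>\<bar> \<le> B \<omega>" "\<And>\<omega>. 0 \<le> ind (T - k) \<omega> \<and> ind (T - k) \<omega> \<le> 1" by auto
  have [measurable]: "\<theta> (T - k) \<in> borel_measurable M" using theta_M by auto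
  note [measurable] = IH(1,2)
  have "(\<lambda>\<omega>. \<theta> (T - k) \<omega> * indicator (Dset M \<sigma> (T - k)) \<omega> + (1 - \<theta> (T - k) \<omega>) * ind (T - k) \<omega>) \<in> borel_measurable M"
    by measurable
  then have m1: "ind ?t \<in> borel_measurable M"
    by (rule measurable_cong[THEN iffD1, rotated]) (simp add: ind_rec[OF tT] st)
  have "(\<lambda>\<omega>. \<theta> (T - k) \<omega> * (G (T - k) \<omega> * indicator (Dset M \<sigma> (T - k)) \<omega>) + (1 - \<theta> (T - k) \<omega>) * GL (T - k) \<omega>) \<in> borel_measurable M"
    by measurable
  then have m2: "GL ?t \<in> borel_measurable M"
    by (rule measurable_cong[THEN iffD1, rotated]) (simp add: GL_rec[OF tT] st)
  have b1: "\<bar>GL ?t \<omega>\<bar> \<le> B \<omega>" for \<omega>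
  proof (cases "\<omega> \<in> space M")
    case True
    show ?thesis using theta_01[of "T - k" \<omega>] IH(3)[of \<omega>] B_ge[of "T - k" \<omega>]
      by (auto simp: GL_rec[OF tT True] st abs_mult)
  next
    case False
    then show ?thesis by (simp add: GL_def Lev_def B_nonneg)
  qed
  have b2: "0 \<le> ind ?t \<omega> \<and> ind ?t \<omega> \<le> 1" for \<omega>
    by (simp add: ind_def)
  show ?case using m1 m2 b1 b2 by blast
qed

lemma ind_M[measurable]: "t \<le> T \<Longrightarrow> ind t \<in> borel_measurable M"
  using ind_GL_M[of "T - t"] by auto
lemma GL_M[measurable]: "t \<le> T \<Longrightarrow> GL t \<in> borel_measurable M"
  using ind_GL_M[of "T - t"] by auto
lemma GL_B: "t \<le> T \<Longrightarrow> \<bar>GL t \<omega>\<bar> \<le> B \<omega>"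
  using ind_GL_M[of "T - t"] by auto
lemma ind_01: "0 \<le> ind t \<omega> \<and> ind t \<omega> \<le> 1"
  by (simp add: ind_def)

lemma ind_int: "t \<le> T \<Longrightarrow> integrable M (ind t)"
  by (rule P.integrable_const_bound[where B=1]) (auto simp: ind_01)
lemma GL_int: "t \<le> T \<Longrightarrow> integrable M (GL t)"
  by (rule Bochner_Integration.integrable_bound[OF B_int]) (auto simp: B_nonneg GL_B)

end

context L32 begin
interpretation P: prob_space M by (rule prob)

lemma h_bound:
  assumes "\<And>\<omega>. h \<omega> = 0 \<or> h \<omega> = (1::real)"
  shows "\<bar>h \<omega> * a\<bar> \<le> \<bar>a\<bar>" "\<bar>(1 - h \<omega>) * a\<bar> \<le> \<bar>a\<bar>"
  using assms[of \<omega>] by auto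

lemma bounded_int:
  fixes A f :: "'a \<Rightarrow> real"
  assumes "integrable M A" "f \<in> borel_measurable M" "\<And>\<omega>. \<bar>f \<omega>\<bar> \<le> \<bar>A \<omega>\<bar>"
  shows "integrable M f"
  by (rule Bochner_Integration.integrable_bound[OF assms(1,2)]) (simp add: assms(3))

lemma combine:
  assumes tT: "t < T"
    and hm: "h \<in> borel_measurable (F (Suc t))" and h01: "\<And>\<omega>. h \<omega> = 0 \<or> h \<omega> = 1"
    and Ai: "integrable M A" and Xi: "integrable M X"
    and Wm: "W \<in> borel_measurable M"
    and WAE: "AE \<omega> in M. W \<omega> = h \<omega> * A \<omega> + (1 - h \<omega>) * real_cond_exp M (F (Suc t)) X \<omega>"
  shows "AE \<omega> in M. real_cond_exp M (F t) W \<omega> = real_cond_exp M (F t) (\<lambda>\<omega>. h \<omega> * A \<omega> + (1 - h \<omega>) * X \<omega>) \<omega>"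
proof -
  interpret St: sigma_finite_subalgebra M "F t" by (rule sfs)
  interpret Su: sigma_finite_subalgebra M "F (Suc t)" by (rule sfs)
  have [measurable]: "h \<in> borel_measurable M" using meas_M[OF hm] .
  note [measurable] = hm Wm
  have [measurable]: "A \<in> borel_measurable M" "X \<in> borel_measurable M" using Ai Xi by auto
  have hA: "integrable M (\<lambda>\<omega>. h \<omega> * A \<omega>)"
    by (rule bounded_int[OF Ai]) (measurable, rule h_bound(1)[OF h01])
  have hX: "integrable M (\<lambda>\<omega>. (1 - h \<omega>) * X \<omega>)"
    by (rule bounded_int[OF Xi]) (measurable, rule h_bound(2)[OF h01])
  have CEX: "integrable M (real_cond_exp M (F (Suc t)) X)" by (rule Su.real_cond_exp_int(1)[OF Xi])
  have hCEX: "integrable M (\<lambda>\<omega>. (1 - h \<omega>) * real_cond_exp M (F (Suc t)) X \<omega>)"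
    by (rule bounded_int[OF CEX]) (measurable, rule h_bound(2)[OF h01])
  have e1: "AE \<omega> in M. real_cond_exp M (F t) W \<omega> = real_cond_exp M (F t) (\<lambda>\<omega>. h \<omega> * A \<omega> + (1 - h \<omega>) * real_cond_exp M (F (Suc t)) X \<omega>) \<omega>"
    by (rule St.real_cond_exp_cong[OF WAE]) measurable
  have e2: "AE \<omega> in M. real_cond_exp M (F t) (\<lambda>\<omega>. h \<omega> * A \<omega> + (1 - h \<omega>) * real_cond_exp M (F (Suc t)) X \<omega>) \<omega>
     = real_cond_exp M (F t) (\<lambda>\<omega>. h \<omega> * A \<omega>) \<omega> + real_cond_exp M (F t) (\<lambda>\<omega>. (1 - h \<omega>) * real_cond_exp M (F (Suc t)) X \<omega>) \<omega>"
    by (rule St.real_cond_exp_add[OF hA hCEX])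
  have e3: "AE \<omega> in M. real_cond_exp M (F (Suc t)) (\<lambda>\<omega>. (1 - h \<omega>) * X \<omega>) \<omega> = (1 - h \<omega>) * real_cond_exp M (F (Suc t)) X \<omega>"
    by (rule Su.real_cond_exp_mult) (measurable, rule hX)
  have e4: "AE \<omega> in M. real_cond_exp M (F t) (\<lambda>\<omega>. (1 - h \<omega>) * real_cond_exp M (F (Suc t)) X \<omega>) \<omega>
      = real_cond_exp M (F t) (real_cond_exp M (F (Suc t)) (\<lambda>\<omega>. (1 - h \<omega>) * X \<omega>)) \<omega>"
    by (rule St.real_cond_exp_cong) (use e3 in \<open>auto elim: AE_mp\<close>)
  have e5: "AE \<omega> in M. real_cond_exp M (F t) (real_cond_exp M (F (Suc t)) (\<lambda>\<omega>. (1 - h \<omega>) * X \<omega>)) \<omega>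
      = real_cond_exp M (F t) (\<lambda>\<omega>. (1 - h \<omega>) * X \<omega>) \<omega>"
    by (rule St.real_cond_exp_nested_subalg[OF subalg sub2 hX]) simp
  have e6: "AE \<omega> in M. real_cond_exp M (F t) (\<lambda>\<omega>. h \<omega> * A \<omega> + (1 - h \<omega>) * X \<omega>) \<omega>
     = real_cond_exp M (F t) (\<lambda>\<omega>. h \<omega> * A \<omega>) \<omega> + real_cond_exp M (F t) (\<lambda>\<omega>. (1 - h \<omega>) * X \<omega>) \<omega>"
    by (rule St.real_cond_exp_add[OF hA hX])
  show ?thesis using e1 e2 e4 e5 e6 by eventually_elim simp
qed

lemma pos_lemma:
  assumes Zi: "integrable M Z" and Z0: "AE \<omega> in M. 0 \<le> Z \<omega>" and Dm: "D \<in> sets M"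
    and ZD: "AE \<omega> in M. \<omega> \<in> D \<longrightarrow> 0 < Z \<omega>"
  shows "AE \<omega> in M. 0 < real_cond_exp M (F u) Z \<omega> \<or> real_cond_exp M (F u) (indicator D) \<omega> = 0"
proof -
  interpret Su: sigma_finite_subalgebra M "F u" by (rule sfs)
  define Bs where "Bs = {\<omega> \<in> space M. real_cond_exp M (F u) Z \<omega> \<le> 0}"
  have "{\<omega> \<in> space (F u). real_cond_exp M (F u) Z \<omega> \<le> 0} \<in> sets (F u)" by measurable
  then have BsF: "Bs \<in> sets (F u)" unfolding Bs_def by simp
  then have [measurable]: "Bs \<in> sets M" by (rule sets_M)
  note [measurable] = Dm
  have [measurable]: "indicator Bs \<in> borel_measurable (F u)" using BsF by measurable
  have [measurable]: "Z \<in> borel_measurable M" using Zi by auto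
  have c0: "AE \<omega> in M. 0 \<le> real_cond_exp M (F u) Z \<omega>"
    by (rule Su.real_cond_exp_pos[OF Z0]) measurable
  have iBZ: "integrable M (\<lambda>\<omega>. indicator Bs \<omega> * Z \<omega>)"
    by (rule bounded_int[OF Zi]) (measurable, simp add: indicator_def)
  have i1: "(\<integral>\<omega>. indicator Bs \<omega> * real_cond_exp M (F u) Z \<omega> \<partial>M) = (\<integral>\<omega>. indicator Bs \<omega> * Z \<omega> \<partial>M)"
    by (rule Su.real_cond_exp_intg(2)[OF iBZ]) measurable
  have z: "AE \<omega> in M. indicator Bs \<omega> * real_cond_exp M (F u) Z \<omega> = 0"
    using c0 by eventually_elim (auto simp: Bs_def indicator_def)
  have "(\<integral>\<omega>. indicator Bs \<omega> * real_cond_exp M (F u) Z \<omega> \<partial>M) = (\<integral>\<omega>. 0 \<partial>M)"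
    by (rule integral_cong_AE[OF _ _ z]) measurable
  then have "(\<integral>\<omega>. indicator Bs \<omega> * Z \<omega> \<partial>M) = 0" using i1 by simp
  moreover have "AE \<omega> in M. 0 \<le> indicator Bs \<omega> * Z \<omega>" using Z0 by eventually_elim (simp add: indicator_def)
  ultimately have "AE \<omega> in M. indicator Bs \<omega> * Z \<omega> = 0"
    using integral_nonneg_eq_0_iff_AE[OF iBZ] by simp
  then have nd: "AE \<omega> in M. indicator Bs \<omega> * (indicator D \<omega> :: real) = 0"
    using ZD by eventually_elim (auto simp: indicator_def split: if_splits)
  have iD: "integrable M (indicator D :: 'a \<Rightarrow> real)"
    by (rule P.integrable_const_bound[where B=1]) (auto simp: indicator_def)
  have iBD: "integrable M (\<lambda>\<omega>. indicator Bs \<omega> * (indicator D \<omega> :: real))"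
    by (rule bounded_int[OF iD]) (measurable, simp add: indicator_def)
  have i2: "(\<integral>\<omega>. indicator Bs \<omega> * real_cond_exp M (F u) (indicator D) \<omega> \<partial>M) = (\<integral>\<omega>. indicator Bs \<omega> * indicator D \<omega> \<partial>M)"
    by (rule Su.real_cond_exp_intg(2)[OF iBD]) measurable
  have i2': "integrable M (\<lambda>\<omega>. indicator Bs \<omega> * real_cond_exp M (F u) (indicator D) \<omega>)"
    by (rule Su.real_cond_exp_intg(1)[OF iBD]) measurable
  have "(\<integral>\<omega>. indicator Bs \<omega> * (indicator D \<omega> :: real) \<partial>M) = (\<integral>\<omega>. 0 \<partial>M)"
    by (rule integral_cong_AE[OF _ _ nd]) measurable
  then have "(\<integral>\<omega>. indicator Bs \<omega> * real_cond_exp M (F u) (indicator D) \<omega> \<partial>M) = 0" using i2 by simp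
  moreover have c1: "AE \<omega> in M. 0 \<le> real_cond_exp M (F u) (indicator D) \<omega>"
    by (rule Su.real_cond_exp_pos) auto
  then have "AE \<omega> in M. 0 \<le> indicator Bs \<omega> * real_cond_exp M (F u) (indicator D) \<omega>"
    by eventually_elim (simp add: indicator_def)
  ultimately have "AE \<omega> in M. indicator Bs \<omega> * real_cond_exp M (F u) (indicator D) \<omega> = 0"
    using integral_nonneg_eq_0_iff_AE[OF i2'] by simp
  then show ?thesis using AE_space
    by eventually_elim (auto simp: Bs_def indicator_def split: if_splits)
qed

lemma DTe: "AE \<omega> in M. t < Te M F \<sigma> T \<omega> \<longrightarrow> \<omega> \<in> Dset M \<sigma> t"
proof -
  interpret St: sigma_finite_subalgebra M "F t" by (rule sfs)
  have iD: "integrable M (indicator (Dset M \<sigma> (Suc t)) :: 'a \<Rightarrow> real)"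
    by (rule P.integrable_const_bound[where B=1]) (auto simp: indicator_def)
  have eq: "(\<lambda>\<omega>. indicator (Dset M \<sigma> t) \<omega> * indicator (Dset M \<sigma> (Suc t)) \<omega>) = (indicator (Dset M \<sigma> (Suc t)) :: 'a \<Rightarrow> real)"
    by (auto simp: fun_eq_iff indicator_def Dset_def) (meson Suc_ile_eq order_less_imp_le)
  have "AE \<omega> in M. real_cond_exp M (F t) (\<lambda>\<omega>. indicator (Dset M \<sigma> t) \<omega> * indicator (Dset M \<sigma> (Suc t)) \<omega>) \<omega>
      = indicator (Dset M \<sigma> t) \<omega> * real_cond_exp M (F t) (indicator (Dset M \<sigma> (Suc t))) \<omega>"
    by (rule St.real_cond_exp_mult) (measurable, simp add: eq iD)
  then have "AE \<omega> in M. cc t \<omega> = indicator (Dset M \<sigma> t) \<omega> * cc t \<omega>"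
    by (simp add: eq cc_def cprob_def)
  then show ?thesis
    by eventually_elim (auto simp: Te_less_iff indicator_def)
qed

end

context L32 begin
interpretation P: prob_space M by (rule prob)

definition RR :: "nat \<Rightarrow> bool" where
  "RR u \<longleftrightarrow>
     (AE \<omega> in M. S u \<omega> = \<theta> u \<omega> * indicator (Dset M \<sigma> u) \<omega> + (1 - \<theta> u \<omega>) * real_cond_exp M (F u) (ind u) \<omega>)
   \<and> (AE \<omega> in M. S u \<omega> * V u \<omega> = \<theta> u \<omega> * (G u \<omega> * indicator (Dset M \<sigma> u) \<omega>) + (1 - \<theta> u \<omega>) * real_cond_exp M (F u) (GL u) \<omega>)
   \<and> (AE \<omega> in M. u < Te M F \<sigma> T \<omega> \<longrightarrow> 0 < real_cond_exp M (F u) (ind u) \<omega>)"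

lemma RR_T: "RR T"
proof -
  have n: "\<And>\<omega>. \<not> T < Te M F \<sigma> T \<omega>" using Te_le by (simp add: not_less)
  show ?thesis unfolding RR_def using n by (auto simp: S_T V_T theta_T intro!: AE_I2)
qed

lemma GD_bound: "s \<le> T \<Longrightarrow> \<bar>G s \<omega> * indicator (Dset M \<sigma> s) \<omega>\<bar> \<le> \<bar>B \<omega>\<bar>"
  using B_ge[of s \<omega>] B_nonneg[of \<omega>] by (simp add: abs_mult)

lemma Q:
  assumes tT: "t < T" and R: "RR (Suc t)"
  shows "AE \<omega> in M. real_cond_exp M (F t) (S (Suc t)) \<omega> = real_cond_exp M (F t) (ind t) \<omega>"
    and "AE \<omega> in M. real_cond_exp M (F t) (\<lambda>\<omega>. S (Suc t) \<omega> * V (Suc t) \<omega>) \<omega> = real_cond_exp M (F t) (GL t) \<omega>"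
    and "AE \<omega> in M. t < Te M F \<sigma> T \<omega> \<longrightarrow> 0 < real_cond_exp M (F t) (ind t) \<omega>"
proof -
  interpret St: sigma_finite_subalgebra M "F t" by (rule sfs)
  interpret Su: sigma_finite_subalgebra M "F (Suc t)" by (rule sfs)
  from R have Ra: "AE \<omega> in M. S (Suc t) \<omega> = \<theta> (Suc t) \<omega> * indicator (Dset M \<sigma> (Suc t)) \<omega> + (1 - \<theta> (Suc t) \<omega>) * real_cond_exp M (F (Suc t)) (ind (Suc t)) \<omega>"
    and Rb: "AE \<omega> in M. S (Suc t) \<omega> * V (Suc t) \<omega> = \<theta> (Suc t) \<omega> * (G (Suc t) \<omega> * indicator (Dset M \<sigma> (Suc t)) \<omega>) + (1 - \<theta> (Suc t) \<omega>) * real_cond_exp M (F (Suc t)) (GL (Suc t)) \<omega>"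
    and Rp: "AE \<omega> in M. Suc t < Te M F \<sigma> T \<omega> \<longrightarrow> 0 < real_cond_exp M (F (Suc t)) (ind (Suc t)) \<omega>"
    unfolding RR_def by auto
  have sT: "Suc t \<le> T" using tT by simp
  have [measurable]: "\<theta> (Suc t) \<in> borel_measurable M" "S (Suc t) \<in> borel_measurable M" "V (Suc t) \<in> borel_measurable M"
    "ind (Suc t) \<in> borel_measurable M" "GL (Suc t) \<in> borel_measurable M" "ind t \<in> borel_measurable M" "GL t \<in> borel_measurable M"
    using sT tT by (auto intro: theta_M S_M V_M ind_M GL_M)
  have iD: "integrable M (indicator (Dset M \<sigma> (Suc t)) :: 'a \<Rightarrow> real)"
    by (rule P.integrable_const_bound[where B=1]) (auto simp: indicator_def)
  have iGD: "integrable M (\<lambda>\<omega>. G (Suc t) \<omega> * indicator (Dset M \<sigma> (Suc t)) \<omega>)"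
    by (rule bounded_int[OF B_int]) (measurable, rule GD_bound[OF sT])
  have indt: "AE \<omega> in M. real_cond_exp M (F t) (\<lambda>\<omega>. \<theta> (Suc t) \<omega> * indicator (Dset M \<sigma> (Suc t)) \<omega> + (1 - \<theta> (Suc t) \<omega>) * ind (Suc t) \<omega>) \<omega>
      = real_cond_exp M (F t) (ind t) \<omega>"
    by (rule St.real_cond_exp_cong) (auto intro!: AE_I2 simp: ind_rec[OF tT])
  have GLt: "AE \<omega> in M. real_cond_exp M (F t) (\<lambda>\<omega>. \<theta> (Suc t) \<omega> * (G (Suc t) \<omega> * indicator (Dset M \<sigma> (Suc t)) \<omega>) + (1 - \<theta> (Suc t) \<omega>) * GL (Suc t) \<omega>) \<omega>
      = real_cond_exp M (F t) (GL t) \<omega>"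
    by (rule St.real_cond_exp_cong) (auto intro!: AE_I2 simp: GL_rec[OF tT])
  have c1: "AE \<omega> in M. real_cond_exp M (F t) (S (Suc t)) \<omega> = real_cond_exp M (F t) (\<lambda>\<omega>. \<theta> (Suc t) \<omega> * indicator (Dset M \<sigma> (Suc t)) \<omega> + (1 - \<theta> (Suc t) \<omega>) * ind (Suc t) \<omega>) \<omega>"
    by (rule combine[OF tT theta_meas[OF sT] theta_01 iD ind_int[OF sT] _ Ra]) measurable
  show "AE \<omega> in M. real_cond_exp M (F t) (S (Suc t)) \<omega> = real_cond_exp M (F t) (ind t) \<omega>"
    using c1 indt by eventually_elim simp
  have c2: "AE \<omega> in M. real_cond_exp M (F t) (\<lambda>\<omega>. S (Suc t) \<omega> * V (Suc t) \<omega>) \<omega> = real_cond_exp M (F t) (\<lambda>\<omega>. \<theta> (Suc t) \<omega> * (G (Suc t) \<omega> * indicator (Dset M \<sigma> (Suc t)) \<omega>) + (1 - \<theta> (Suc t) \<omega>) * GL (Suc t) \<omega>) \<omega>"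
    by (rule combine[OF tT theta_meas[OF sT] theta_01 iGD GL_int[OF sT] _ Rb]) measurable
  show "AE \<omega> in M. real_cond_exp M (F t) (\<lambda>\<omega>. S (Suc t) \<omega> * V (Suc t) \<omega>) \<omega> = real_cond_exp M (F t) (GL t) \<omega>"
    using c2 GLt by eventually_elim simp
  define Z where "Z = (\<lambda>\<omega>. \<theta> (Suc t) \<omega> * indicator (Dset M \<sigma> (Suc t)) \<omega> + (1 - \<theta> (Suc t) \<omega>) * real_cond_exp M (F (Suc t)) (ind (Suc t)) \<omega>)"
  have [measurable]: "Z \<in> borel_measurable M" unfolding Z_def by measurable
  have cZ: "AE \<omega> in M. real_cond_exp M (F t) Z \<omega> = real_cond_exp M (F t) (\<lambda>\<omega>. \<theta> (Suc t) \<omega> * indicator (Dset M \<sigma> (Suc t)) \<omega> + (1 - \<theta> (Suc t) \<omega>) * ind (Suc t) \<omega>) \<omega>"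
    by (rule combine[OF tT theta_meas[OF sT] theta_01 iD ind_int[OF sT]]) (measurable, simp add: Z_def)
  have iCE: "integrable M (real_cond_exp M (F (Suc t)) (ind (Suc t)))"
    by (rule Su.real_cond_exp_int(1)[OF ind_int[OF sT]])
  have Zi: "integrable M Z" unfolding Z_def
  proof (rule Bochner_Integration.integrable_add)
    show "integrable M (\<lambda>x. \<theta> (Suc t) x * indicat_real (Dset M \<sigma> (Suc t)) x)"
      by (rule bounded_int[OF iD]) (measurable, rule h_bound(1)[OF theta_01])
    show "integrable M (\<lambda>x. (1 - \<theta> (Suc t) x) * real_cond_exp M (F (Suc t)) (ind (Suc t)) x)"
      by (rule bounded_int[OF iCE]) (measurable, rule h_bound(2)[OF theta_01])
  qed
  have CEp: "AE \<omega> in M. 0 \<le> real_cond_exp M (F (Suc t)) (ind (Suc t)) \<omega>"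
    by (rule Su.real_cond_exp_pos) (auto simp: ind_01)
  have Z0: "AE \<omega> in M. 0 \<le> Z \<omega>"
    using CEp
  proof eventually_elim
    case (elim \<omega>)
    then show ?case using theta_01[of "Suc t" \<omega>] by (auto simp: Z_def)
  qed
  have ZD: "AE \<omega> in M. \<omega> \<in> Dset M \<sigma> (Suc t) \<longrightarrow> 0 < Z \<omega>"
    using Rp
  proof eventually_elim
    case (elim \<omega>)
    show ?case
    proof (cases "\<theta> (Suc t) \<omega> = 1")
      case True
      then show ?thesis by (simp add: Z_def)
    next
      case False
      then have "\<theta> (Suc t) \<omega> = 0" using theta_01 by metis
      then show ?thesis using elim theta0[OF sT] by (simp add: Z_def)
    qed
  qed
  have pl: "AE \<omega> in M. 0 < real_cond_exp M (F t) Z \<omega> \<or> real_cond_exp M (F t) (indicator (Dset M \<sigma> (Suc t))) \<omega> = 0"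
    by (rule pos_lemma[OF Zi Z0 Dset_M ZD])
  show "AE \<omega> in M. t < Te M F \<sigma> T \<omega> \<longrightarrow> 0 < real_cond_exp M (F t) (ind t) \<omega>"
    using pl cZ indt
  proof eventually_elim
    case (elim \<omega>)
    show ?case
    proof
      assume "t < Te M F \<sigma> T \<omega>"
      then have "cc t \<omega> \<noteq> 0" by (simp add: Te_less_iff)
      then show "0 < real_cond_exp M (F t) (ind t) \<omega>" using elim by (simp add: cc_def cprob_def)
    qed
  qed
qed

lemma R_step:
  assumes tT: "t < T" and R: "RR (Suc t)"
  shows "RR t"
proof -
  note Qa = Q(1)[OF tT R] and Qb = Q(2)[OF tT R] and Qp = Q(3)[OF tT R]
  have Ra: "AE \<omega> in M. S t \<omega> = \<theta> t \<omega> * indicator (Dset M \<sigma> t) \<omega> + (1 - \<theta> t \<omega>) * real_cond_exp M (F t) (ind t) \<omega>"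
    using Qa DTe[of t]
  proof eventually_elim
    case (elim \<omega>)
    show ?case
    proof (cases "t < Te M F \<sigma> T \<omega>")
      case True
      then have D: "indicator (Dset M \<sigma> t) \<omega> = (1::real)" using elim by simp
      show ?thesis
      proof (cases "G t \<omega> < J t \<omega>")
        case c: True
        then have "V t \<omega> = J t \<omega>" "S t \<omega> = real_cond_exp M (F t) (S (Suc t)) \<omega>"
          using rec_cont[OF tT True c] by auto
        moreover have "\<theta> t \<omega> = 0" using c calculation by (simp add: theta_def)
        ultimately show ?thesis using elim by simp
      next
        case c: False
        then have "V t \<omega> = G t \<omega>" "S t \<omega> = 1"
          using rec_stop[OF tT True] by auto
        moreover have "\<theta> t \<omega> = 1" using calculation by (simp add: theta_def)
        ultimately show ?thesis using D by simp
      qed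
    next
      case False
      then have "Te M F \<sigma> T \<omega> \<le> t" by simp
      then show ?thesis using rec_end[OF tT] theta_end[of t \<omega>] tT by simp
    qed
  qed
  have Rb: "AE \<omega> in M. S t \<omega> * V t \<omega> = \<theta> t \<omega> * (G t \<omega> * indicator (Dset M \<sigma> t) \<omega>) + (1 - \<theta> t \<omega>) * real_cond_exp M (F t) (GL t) \<omega>"
    using Qa Qb Qp DTe[of t]
  proof eventually_elim
    case (elim \<omega>)
    show ?case
    proof (cases "t < Te M F \<sigma> T \<omega>")
      case True
      then have D: "indicator (Dset M \<sigma> t) \<omega> = (1::real)" using elim by simp
      show ?thesis
      proof (cases "G t \<omega> < J t \<omega>")
        case c: True
        then have VJ: "V t \<omega> = J t \<omega>" and SC: "S t \<omega> = real_cond_exp M (F t) (S (Suc t)) \<omega>"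
          using rec_cont[OF tT True c] by auto
        have th: "\<theta> t \<omega> = 0" using c VJ by (simp add: theta_def)
        have pos: "real_cond_exp M (F t) (S (Suc t)) \<omega> \<noteq> 0" using elim True by simp
        have "S t \<omega> * V t \<omega> = real_cond_exp M (F t) (\<lambda>\<omega>'. S (Suc t) \<omega>' * V (Suc t) \<omega>') \<omega>"
          using SC VJ J_def[OF tT True] pos by simp
        then show ?thesis using th elim by simp
      next
        case c: False
        then have "V t \<omega> = G t \<omega>" "S t \<omega> = 1"
          using rec_stop[OF tT True] by auto
        moreover have "\<theta> t \<omega> = 1" using calculation by (simp add: theta_def)
        ultimately show ?thesis using D by simp
      qed
    next
      case False
      then have "Te M F \<sigma> T \<omega> \<le> t" by simp
      then show ?thesis using rec_end[OF tT] theta_end[of t \<omega>] tT by (simp add: mult.commute)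
    qed
  qed
  show ?thesis unfolding RR_def using Ra Rb Qp by blast
qed

lemma RR_main: "k \<le> T \<Longrightarrow> RR (T - k)"
proof (induction k)
  case 0
  then show ?case using RR_T by simp
next
  case (Suc k)
  then have a: "T - Suc k < T" and b: "Suc (T - Suc k) = T - k" by auto
  have "RR (Suc (T - Suc k))" using Suc b by simp
  then show ?case by (rule R_step[OF a])
qed

lemma RR_all: "t \<le> T \<Longrightarrow> RR t"
  using RR_main[of "T - t"] by simp

lemma Jtheta_eq: "Jtheta M F \<sigma> G T \<theta> t \<omega> = real_cond_exp M (F t) (GL t) \<omega> / real_cond_exp M (F t) (ind t) \<omega>"
  by (simp add: Jtheta_def GL_def ind_def cprob_def)

end


theorem lemma3p2:
  fixes M :: "'a measure" and F :: "nat \<Rightarrow> 'a measure" and \<sigma> :: "'a \<Rightarrow> enat"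
    and G V S J \<theta> :: "nat \<Rightarrow> 'a \<Rightarrow> real" and T :: nat
  assumes prob: "prob_space M"
    and subalg: "\<And>t. subalgebra M (F t)"
    and filt: "\<And>s t. s \<le> t \<Longrightarrow> sets (F s) \<subseteq> sets (F t)"
    and F0: "sets (F 0) = {{}, space M}"
    and stopping: "\<And>t. {\<omega> \<in> space M. \<sigma> \<omega> \<le> enat t} \<in> sets (F t)"
    and sigma_pos: "AE \<omega> in M. 0 < \<sigma> \<omega>"
    and adapted: "\<And>t. G t \<in> borel_measurable (F t)"
    and integr: "integrable M (\<lambda>\<omega>. Max ((\<lambda>t. \<bar>G t \<omega>\<bar> * indicator (Dset M \<sigma> t) \<omega>) ` {..T}))"
    and V_T: "\<And>\<omega>. V T \<omega> = G T \<omega>"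
    and S_T: "\<And>\<omega>. S T \<omega> = indicator (Dset M \<sigma> T) \<omega>"
    and J_def: "\<And>t \<omega>. t < T \<Longrightarrow> t < Te M F \<sigma> T \<omega> \<Longrightarrow>
       J t \<omega> = real_cond_exp M (F t) (\<lambda>\<omega>'. S (Suc t) \<omega>' * V (Suc t) \<omega>') \<omega>
                / real_cond_exp M (F t) (S (Suc t)) \<omega>"
    and rec_stop: "\<And>t \<omega>. t < T \<Longrightarrow> t < Te M F \<sigma> T \<omega> \<Longrightarrow> G t \<omega> \<ge> J t \<omega> \<Longrightarrow>
       V t \<omega> = G t \<omega> \<and> S t \<omega> = 1"
    and rec_cont: "\<And>t \<omega>. t < T \<Longrightarrow> t < Te M F \<sigma> T \<omega> \<Longrightarrow> G t \<omega> < J t \<omega> \<Longrightarrow>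
       V t \<omega> = J t \<omega> \<and> S t \<omega> = real_cond_exp M (F t) (S (Suc t)) \<omega>"
    and rec_end: "\<And>t \<omega>. t < T \<Longrightarrow> Te M F \<sigma> T \<omega> \<le> t \<Longrightarrow>
       V t \<omega> = G t \<omega> \<and> S t \<omega> = indicator (Dset M \<sigma> t) \<omega>"
    and theta_def: "\<And>t \<omega>. \<theta> t \<omega> = (if G t \<omega> \<ge> V t \<omega> then 1 else 0)"
  shows "admissible M F \<sigma> T \<theta>
    \<and> (\<forall>t. AE \<omega> in M. t < Te M F \<sigma> T \<omega> \<longrightarrow> J t \<omega> = Jtheta M F \<sigma> G T \<theta> t \<omega>)
    \<and> (\<forall>t. AE \<omega> in M. t < Te M F \<sigma> T \<omega> \<longrightarrow>
          real_cond_exp M (F t) (S (Suc t)) \<omega> = cprob M (F t) (Lev M \<sigma> T \<theta> t) \<omega>)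
    \<and> (\<forall>t\<le>T. AE \<omega> in M.
          (\<omega> \<in> Dset M \<sigma> t \<and> \<theta> t \<omega> = 0 \<longrightarrow> S t \<omega> = cprob M (F t) (Lev M \<sigma> T \<theta> t) \<omega>)
        \<and> (\<omega> \<in> Dset M \<sigma> t \<and> \<theta> t \<omega> = 1 \<longrightarrow> S t \<omega> = 1)
        \<and> (\<omega> \<notin> Dset M \<sigma> t \<longrightarrow> S t \<omega> = 0))"
proof -
  interpret L: L32 M F \<sigma> G V S J \<theta> T
    by (rule L32.intro) (fact prob subalg filt stopping adapted integr V_T S_T J_def rec_stop rec_cont rec_end theta_def)+
  have cp: "cprob M (F t) (Lev M \<sigma> T \<theta> t) = real_cond_exp M (F t) (L.ind t)" for t
    by (simp add: cprob_def L.ind_def)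
  have nT: "\<And>t \<omega>. t < Te M F \<sigma> T \<omega> \<Longrightarrow> t < T" using L.Te_le less_le_trans by blast
  have adm: "admissible M F \<sigma> T \<theta>"
    unfolding admissible_def
  proof (intro conjI allI impI)
    fix t assume t: "t \<le> T"
    show "\<theta> t \<in> borel_measurable (F t)" by (rule L.theta_meas[OF t])
    show "\<forall>\<omega>\<in>space M. \<theta> t \<omega> \<in> {0, 1}" using L.theta_01 by auto
    show "AE \<omega> in M. t < Te M F \<sigma> T \<omega> \<longrightarrow> 0 < cprob M (F t) (Lev M \<sigma> T \<theta> t) \<omega>"
      using L.RR_all[OF t] unfolding L.RR_def cp by blast
    show "AE \<omega> in M. Te M F \<sigma> T \<omega> \<le> t \<longrightarrow> \<theta> t \<omega> = 1"
      using L.theta_end[OF t] by (intro AE_I2) auto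
  qed
  have p2: "AE \<omega> in M. t < Te M F \<sigma> T \<omega> \<longrightarrow> J t \<omega> = Jtheta M F \<sigma> G T \<theta> t \<omega>" for t
  proof (cases "t < T")
    case True
    have R: "L.RR (Suc t)" using True by (intro L.RR_all) simp
    show ?thesis using L.Q(1)[OF True R] L.Q(2)[OF True R]
      by eventually_elim (simp add: J_def[OF True] L.Jtheta_eq)
  next
    case False
    then show ?thesis using nT by (intro AE_I2) auto
  qed
  have p3: "AE \<omega> in M. t < Te M F \<sigma> T \<omega> \<longrightarrow>
          real_cond_exp M (F t) (S (Suc t)) \<omega> = cprob M (F t) (Lev M \<sigma> T \<theta> t) \<omega>" for t
  proof (cases "t < T")
    case True
    have R: "L.RR (Suc t)" using True by (intro L.RR_all) simp
    show ?thesis using L.Q(1)[OF True R] by eventually_elim (simp add: cp)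
  next
    case False
    then show ?thesis using nT by (intro AE_I2) auto
  qed
  have p4: "AE \<omega> in M.
          (\<omega> \<in> Dset M \<sigma> t \<and> \<theta> t \<omega> = 0 \<longrightarrow> S t \<omega> = cprob M (F t) (Lev M \<sigma> T \<theta> t) \<omega>)
        \<and> (\<omega> \<in> Dset M \<sigma> t \<and> \<theta> t \<omega> = 1 \<longrightarrow> S t \<omega> = 1)
        \<and> (\<omega> \<notin> Dset M \<sigma> t \<longrightarrow> S t \<omega> = 0)" if t: "t \<le> T" for t
  proof -
    have Ra: "AE \<omega> in M. S t \<omega> = \<theta> t \<omega> * indicator (Dset M \<sigma> t) \<omega> + (1 - \<theta> t \<omega>) * real_cond_exp M (F t) (L.ind t) \<omega>"
      using L.RR_all[OF t] unfolding L.RR_def by blast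
    show ?thesis using Ra L.DTe[of t]
    proof eventually_elim
      case (elim \<omega>)
      show ?case
      proof (cases "\<theta> t \<omega> = 1")
        case True
        then show ?thesis using elim by simp
      next
        case False
        then have th: "\<theta> t \<omega> = 0" using L.theta_01 by metis
        then have "\<omega> \<in> Dset M \<sigma> t" using elim L.theta0[OF t th] by simp
        then show ?thesis using elim th by (simp add: cp)
      qed
    qed
  qed
  show ?thesis using adm p2 p3 p4 by blast
qed

end
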